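(* Let $\mathcal{A}$ be a complete deterministic timed automaton (CTA). If two valid reset-clocked words $\gamma_{r1},\gamma_{r2}$ of $\mathcal{A}$ reach the same symbolic state of $\mathcal{A}$, then $\gamma_{r1}\sim_{\mathscr{L}_r(\mathcal{A})}\gamma_{r2}$.
   Context: Let $\Sigma$ be a finite alphabet and $\mathcal{C}=\{c_1,\dots,c_m\}$ a finite set of clocks. A clock constraint is a finite conjunction of atomic constraints $c\sim k$ ($c\in\mathcal{C}$, $k\in\mathbb{N}$, ${\sim}\in\{<,\le,=,\ge,>\}$). A clock valuation is $\nu:\mathcal{C}\to\mathbb{R}_{\ge0}$ (a vector in $\mathbb{R}_{\ge0}^m$); $\nu+d$ adds $d$ to all clocks, $[\mathcal{B}\to0]\nu$ resets clocks in $\mathcal{B}$. A timed automaton is $\mathcal{A}=(\Sigma,L,l_0,F,\mathcal{C},\Delta)$ with finite location set $L$, initial $l_0$, accepting $F\subseteq L$, transitions $\Delta\subseteq L\times\Sigma\times\Phi(\mathcal{C})\times2^{\mathcal{C}}\times L$. A run over a delay-timed word $(\sigma_1,t_1)\cdots(\sigma_n,t_n)$ is $(l_0,\nu_0)\xrightarrow{t_1,\sigma_1}\cdots\xrightarrow{t_n,\sigma_n}(l_n,\nu_n)$ with $\nu_0\equiv0$ and transitions $(l_{i-1},\sigma_i,\phi_i,\mathcal{B}_i,l_i)\in\Delta$ with $\nu_{i-1}+t_i$ satisfying $\phi_i$ and $\nu_i=[\mathcal{B}_i\to0](\nu_{i-1}+t_i)$; accepting if $l_n\in F$. $\mathcal{A}$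 is a CTA if every delay-timed word has exactly one run. The reset-clocked word of the run is $(\sigma_1,\mathbf{v}_1,\mathbf{b}_1)\cdots(\sigma_n,\mathbf{v}_n,\mathbf{b}_n)$ with $\mathbf{v}_i=\nu_{i-1}+t_i$ and $\mathbf{b}_{i,j}=\top$ iff $c_j\in\mathcal{B}_i$ (else $\bot$). $\mathscr{L}_r(\mathcal{A})$ is the set of reset-clocked words of accepting runs. A reset-clocked word (any finite sequence in $(\Sigma\times\mathbb{R}_{\ge0}^m\times\{\top,\bot\}^m)^*$) is valid for $\mathcal{A}$ if it is the reset-clocked word of some run, and then reaches that run's final symbolic state $(l_n,\llbracket\nu_n\rrbracket)$. $resets(\cdot)$ returns $\mathbf{b}_1,\dots,\mathbf{b}_n$; $vw(\cdot)$ drops resets. Regions: with $\kappa(c)$ the largest integer in guards of $\mathcal{A}$ over $c$, $\nu,\nu'$ are region-equivalent iff (i) for all $c$, $\lfloor\nu(c)\rfloor=\lfloor\nu'(c)\rfloor$ or both exceed $\kappa(c)$; (ii) for $c$ with $\nu(c)\le\kappa(c)$, $\mathrm{frac}(\nu(c))=0$ iff $\mathrm{frac}(\nu'(c))=0$; (iii) for $c_i,c_j$ with $\nu(c_i)\le\kappa(c_i),\nu(c_j)\le\kappa(c_j)$, $\mathrm{frac}(\nu(c_i))\le\mathrm{frac}(\nu(c_j))$ iff $\mathrm{frac}(\nu'(c_i))\le\mathrm{frac}(\nu'(c_j))$; $\llbracket\nu\rrbracket$ denotes the region, symbolic states are pairs (location, region). A region word is a finite sequence of pairs $(\sigma,R)$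 with $R$ a region; a clocked word maps to its region word $\llbracket\cdot\rrbracket$ componentwise. $\mathit{vs}_{\mathcal{A}}(\gamma_r,\xi)$ is the set of reset-clocked $\gamma_r'$ with $\llbracket vw(\gamma_r')\rrbracket=\xi$ and $\gamma_r\gamma_r'$ valid for $\mathcal{A}$. The relation $\gamma_{r1}\sim_{\mathscr{L}_r(\mathcal{A})}\gamma_{r2}$ holds iff for every region word $\xi$ and all $\gamma_{r1}'\in\mathit{vs}_{\mathcal{A}}(\gamma_{r1},\xi)$, $\gamma_{r2}'\in\mathit{vs}_{\mathcal{A}}(\gamma_{r2},\xi)$: $\gamma_{r1}\gamma_{r1}'\in\mathscr{L}_r(\mathcal{A})$ iff $\gamma_{r2}\gamma_{r2}'\in\mathscr{L}_r(\mathcal{A})$, and $resets(\gamma_{r1}')=resets(\gamma_{r2}')$. *)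

theory Defs
  imports Main "HOL.Archimedean_Field" "HOL.Real"
begin

text \<open>Clocks are the elements of a finite type 'c (the finite clock set C);
  a clock valuation is a function 'c => real (a vector in R>=0^m).\<close>

datatype cmp = CLt | CLe | CEq | CGe | CGt

type_synonym 'c atom = "'c \<times> cmp \<times> nat"
type_synonym 'c guard = "'c atom list"
type_synonym 'c val = "'c \<Rightarrow> real"

fun cmp_sat :: "cmp \<Rightarrow> real \<Rightarrow> real \<Rightarrow> bool" where
  "cmp_sat CLt x k = (x < k)"
| "cmp_sat CLe x k = (x \<le> k)"
| "cmp_sat CEq x k = (x = k)"
| "cmp_sat CGe x k = (x \<ge> k)"
| "cmp_sat CGt x k = (x > k)"

definition guard_sat :: "'c guard \<Rightarrow> 'c val \<Rightarrow> bool" where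
  "guard_sat g \<nu> = (\<forall>(c, op, k) \<in> set g. cmp_sat op (\<nu> c) (real k))"

definition delay :: "'c val \<Rightarrow> real \<Rightarrow> 'c val" where
  "delay \<nu> d = (\<lambda>c. \<nu> c + d)"

definition reset :: "'c set \<Rightarrow> 'c val \<Rightarrow> 'c val" where
  "reset B \<nu> = (\<lambda>c. if c \<in> B then 0 else \<nu> c)"

type_synonym ('s, 'l, 'c) transition = "'l \<times> 's \<times> 'c guard \<times> 'c set \<times> 'l"

record ('s, 'l, 'c) ta =
  alpha :: "'s set"
  locs  :: "'l set"
  init  :: "'l"
  acc   :: "'l set"
  trans :: "('s, 'l, 'c) transition set"

definition ta_wf :: "('s, 'l, 'c) ta \<Rightarrow> bool" where
  "ta_wf A \<longleftrightarrow> finite (alpha A) \<and> finite (locs A) \<and> init A \<in> locs A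
     \<and> acc A \<subseteq> locs A \<and> finite (trans A)
     \<and> (\<forall>(l, \<sigma>, g, B, l') \<in> trans A. l \<in> locs A \<and> \<sigma> \<in> alpha A \<and> l' \<in> locs A)"

definition tword :: "('s, 'l, 'c) ta \<Rightarrow> ('s \<times> real) list \<Rightarrow> bool" where
  "tword A w \<longleftrightarrow> (\<forall>(\<sigma>, t) \<in> set w. \<sigma> \<in> alpha A \<and> 0 \<le> t)"

text \<open>A run from configuration (l, nu) over a delay-timed word, given by the
  sequence of transitions taken (the valuations are then determined).\<close>
fun is_run :: "('s, 'l, 'c) ta \<Rightarrow> 'l \<Rightarrow> 'c val \<Rightarrow> ('s \<times> real) list
      \<Rightarrow> ('s, 'l, 'c) transition list \<Rightarrow> bool" where
  "is_run A l \<nu> [] [] = True"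
| "is_run A l \<nu> ((\<sigma>, t) # w) ((l1, \<sigma>1, g, B, l2) # ds) =
     ((l1, \<sigma>1, g, B, l2) \<in> trans A \<and> l1 = l \<and> \<sigma>1 = \<sigma> \<and> guard_sat g (delay \<nu> t)
      \<and> is_run A l2 (reset B (delay \<nu> t)) w ds)"
| "is_run A l \<nu> _ _ = False"

text \<open>Reset-clocked word of a run: (sigma_i, nu_{i-1}+t_i, b_i), b_i c = True iff c reset.\<close>
type_synonym ('s, 'c) rcword = "('s \<times> 'c val \<times> ('c \<Rightarrow> bool)) list"

fun rcw_of :: "'c val \<Rightarrow> ('s \<times> real) list \<Rightarrow> ('s, 'l, 'c) transition list \<Rightarrow> ('s, 'c) rcword" where
  "rcw_of \<nu> ((\<sigma>, t) # w) ((l1, \<sigma>1, g, B, l2) # ds) =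
     (\<sigma>, delay \<nu> t, (\<lambda>c. c \<in> B)) # rcw_of (reset B (delay \<nu> t)) w ds"
| "rcw_of \<nu> _ _ = []"

fun final_of :: "'l \<Rightarrow> 'c val \<Rightarrow> ('s \<times> real) list \<Rightarrow> ('s, 'l, 'c) transition list \<Rightarrow> 'l \<times> 'c val" where
  "final_of l \<nu> ((\<sigma>, t) # w) ((l1, \<sigma>1, g, B, l2) # ds) =
     final_of l2 (reset B (delay \<nu> t)) w ds"
| "final_of l \<nu> _ _ = (l, \<nu>)"

definition zero_val :: "'c val" where "zero_val = (\<lambda>_. 0)"

definition run :: "('s, 'l, 'c) ta \<Rightarrow> ('s \<times> real) list \<Rightarrow> ('s, 'l, 'c) transition list \<Rightarrow> bool" where
  "run A w ds \<longleftrightarrow> tword A w \<and> is_run A (init A) zero_val w ds"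

definition CTA :: "('s, 'l, 'c) ta \<Rightarrow> bool" where
  "CTA A \<longleftrightarrow> ta_wf A \<and> (\<forall>w. tword A w \<longrightarrow> (\<exists>!ds. run A w ds))"

definition Lr :: "('s, 'l, 'c) ta \<Rightarrow> ('s, 'c) rcword set" where
  "Lr A = {rcw_of zero_val w ds | w ds. run A w ds \<and> fst (final_of (init A) zero_val w ds) \<in> acc A}"

definition valid_rc :: "('s, 'l, 'c) ta \<Rightarrow> ('s, 'c) rcword \<Rightarrow> bool" where
  "valid_rc A \<gamma> \<longleftrightarrow> (\<exists>w ds. run A w ds \<and> rcw_of zero_val w ds = \<gamma>)"

definition kappa :: "('s, 'l, 'c) ta \<Rightarrow> 'c \<Rightarrow> real" where
  "kappa A c = real (Max (insert 0 {k. \<exists>(l, \<sigma>, g, B, l') \<in> trans A. \<exists>op. (c, op, k) \<in> set g}))"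

definition region_equiv :: "('s, 'l, 'c) ta \<Rightarrow> 'c val \<Rightarrow> 'c val \<Rightarrow> bool" where
  "region_equiv A \<nu> \<nu>' \<longleftrightarrow>
     (\<forall>c. \<lfloor>\<nu> c\<rfloor> = \<lfloor>\<nu>' c\<rfloor> \<or> (\<nu> c > kappa A c \<and> \<nu>' c > kappa A c))
   \<and> (\<forall>c. \<nu> c \<le> kappa A c \<longrightarrow> (frac (\<nu> c) = 0 \<longleftrightarrow> frac (\<nu>' c) = 0))
   \<and> (\<forall>ci cj. \<nu> ci \<le> kappa A ci \<and> \<nu> cj \<le> kappa A cj \<longrightarrow>
        (frac (\<nu> ci) \<le> frac (\<nu> cj) \<longleftrightarrow> frac (\<nu>' ci) \<le> frac (\<nu>' cj)))"

definition region :: "('s, 'l, 'c) ta \<Rightarrow> 'c val \<Rightarrow> 'c val set" where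
  "region A \<nu> = {\<nu>'. (\<forall>c. 0 \<le> \<nu>' c) \<and> region_equiv A \<nu> \<nu>'}"

definition reaches :: "('s, 'l, 'c) ta \<Rightarrow> ('s, 'c) rcword \<Rightarrow> 'l \<times> 'c val set \<Rightarrow> bool" where
  "reaches A \<gamma> q \<longleftrightarrow> (\<exists>w ds. run A w ds \<and> rcw_of zero_val w ds = \<gamma> \<and>
       (let (l, \<nu>) = final_of (init A) zero_val w ds in q = (l, region A \<nu>)))"

definition resets :: "('s, 'c) rcword \<Rightarrow> ('c \<Rightarrow> bool) list" where
  "resets \<gamma> = map (\<lambda>(\<sigma>, v, b). b) \<gamma>"

definition region_word :: "('s, 'l, 'c) ta \<Rightarrow> ('s, 'c) rcword \<Rightarrow> ('s \<times> 'c val set) list" where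
  "region_word A \<gamma> = map (\<lambda>(\<sigma>, v, b). (\<sigma>, region A v)) \<gamma>"

definition vs :: "('s, 'l, 'c) ta \<Rightarrow> ('s, 'c) rcword \<Rightarrow> ('s \<times> 'c val set) list \<Rightarrow> ('s, 'c) rcword set" where
  "vs A \<gamma> \<xi> = {\<gamma>'. region_word A \<gamma>' = \<xi> \<and> valid_rc A (\<gamma> @ \<gamma>')}"

definition rc_equiv :: "('s, 'l, 'c) ta \<Rightarrow> ('s, 'c) rcword \<Rightarrow> ('s, 'c) rcword \<Rightarrow> bool" where
  "rc_equiv A \<gamma>1 \<gamma>2 \<longleftrightarrow>
     (\<forall>\<xi>. \<forall>\<gamma>1' \<in> vs A \<gamma>1 \<xi>. \<forall>\<gamma>2' \<in> vs A \<gamma>2 \<xi>.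
        (\<gamma>1 @ \<gamma>1' \<in> Lr A \<longleftrightarrow> \<gamma>2 @ \<gamma>2' \<in> Lr A) \<and> resets \<gamma>1' = resets \<gamma>2')"

end

theory Submission
  imports Defs
begin
lemma atom_equiv:
  fixes x y K :: real and k :: nat
  assumes f: "\<lfloor>x\<rfloor> = \<lfloor>y\<rfloor> \<or> (x > K \<and> y > K)"
    and a: "x \<le> K \<longrightarrow> (frac x = 0 \<longleftrightarrow> frac y = 0)"
    and b: "y \<le> K \<longrightarrow> (frac y = 0 \<longleftrightarrow> frac x = 0)"
    and k: "real k \<le> K"
    and s: "cmp_sat op x (real k)"
  shows "cmp_sat op y (real k)"
proof -
  have lt: "(z < real k) \<longleftrightarrow> \<lfloor>z\<rfloor> < int k" for z :: real
    by (simp add: floor_less_iff)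
  have eq: "(z = real k) \<longleftrightarrow> \<lfloor>z\<rfloor> = int k \<and> frac z = 0" for z :: real
    by (metis floor_of_nat frac_def frac_of_int of_int_of_nat_eq diff_eq_eq add.right_neutral)
  show ?thesis
  proof (cases "\<lfloor>x\<rfloor> = \<lfloor>y\<rfloor>")
    case False
    then have "x > K" "y > K" using f by auto
    then show ?thesis using s k by (cases op) auto
  next
    case True
    have feq: "\<lfloor>x\<rfloor> = int k \<Longrightarrow> (frac x = 0 \<longleftrightarrow> frac y = 0)"
      using a b k True by (smt (verit) eq)
    show ?thesis using s True feq lt[of x] lt[of y] eq[of x] eq[of y]
      by (cases op) auto
  qed
qed

lemma is_run_len: "is_run A l \<nu> w ds \<Longrightarrow> length w = length ds"
  by (induction A l \<nu> w ds rule: is_run.induct) auto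

lemma is_run_append:
  "length u = length e \<Longrightarrow>
   is_run A l \<nu> (u @ w) (e @ d) \<longleftrightarrow>
   (is_run A l \<nu> u e \<and> is_run A (fst (final_of l \<nu> u e)) (snd (final_of l \<nu> u e)) w d)"
proof (induction u arbitrary: e l \<nu>)
  case Nil then show ?case by simp
next
  case (Cons a u)
  then obtain x e' where e: "e = x # e'" by (cases e) auto
  obtain \<sigma> t where a: "a = (\<sigma>, t)" by (cases a)
  obtain l1 \<sigma>1 g B l2 where x: "x = (l1, \<sigma>1, g, B, l2)" by (cases x)
  show ?case using Cons e a x by auto
qed

lemma rcw_append:
  "length u = length e \<Longrightarrow>
   rcw_of \<nu> (u @ w) (e @ d) = rcw_of \<nu> u e @ rcw_of (snd (final_of l \<nu> u e)) w d"
proof (induction u arbitrary: e l \<nu>)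
  case Nil then show ?case by simp
next
  case (Cons a u)
  then obtain x e' where e: "e = x # e'" by (cases e) auto
  obtain \<sigma> t where a: "a = (\<sigma>, t)" by (cases a)
  obtain l1 \<sigma>1 g B l2 where x: "x = (l1, \<sigma>1, g, B, l2)" by (cases x)
  show ?case using Cons e a x by auto
qed

lemma final_append:
  "length u = length e \<Longrightarrow>
   final_of l \<nu> (u @ w) (e @ d) = final_of (fst (final_of l \<nu> u e)) (snd (final_of l \<nu> u e)) w d"
proof (induction u arbitrary: e l \<nu>)
  case Nil then show ?case by simp
next
  case (Cons a u)
  then obtain x e' where e: "e = x # e'" by (cases e) auto
  obtain \<sigma> t where a: "a = (\<sigma>, t)" by (cases a)
  obtain l1 \<sigma>1 g B l2 where x: "x = (l1, \<sigma>1, g, B, l2)" by (cases x)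
  show ?case using Cons e a x by auto
qed

lemma rcw_len: "length w = length d \<Longrightarrow> length (rcw_of \<nu> w d) = length w"
proof (induction w arbitrary: d \<nu>)
  case Nil then show ?case by simp
next
  case (Cons a u)
  then obtain x e' where e: "d = x # e'" by (cases d) auto
  obtain \<sigma> t where a: "a = (\<sigma>, t)" by (cases a)
  obtain l1 \<sigma>1 g B l2 where x: "x = (l1, \<sigma>1, g, B, l2)" by (cases x)
  show ?case using Cons e a x by auto
qed

lemma rcw_inj: "length w = length d \<Longrightarrow> length w' = length d' \<Longrightarrow>
   rcw_of \<nu> w d = rcw_of \<nu> w' d' \<Longrightarrow> w = w'"
proof (induction w arbitrary: d \<nu> w' d')
  case Nil then show ?case by (cases w'; cases d'; auto)
next
  case (Cons a u)
  then obtain x e' where e: "d = x # e'" by (cases d) auto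
  obtain \<sigma> t where a: "a = (\<sigma>, t)" by (cases a)
  obtain l1 \<sigma>1 g B l2 where x: "x = (l1, \<sigma>1, g, B, l2)" by (cases x)
  from Cons.prems e a x obtain a' u' x' e2 where w': "w' = a' # u'" and d': "d' = x' # e2"
    by (cases w'; cases d'; auto)
  obtain \<sigma>' t' where a': "a' = (\<sigma>', t')" by (cases a')
  obtain l1' \<sigma>1' g' B' l2' where x': "x' = (l1', \<sigma>1', g', B', l2')" by (cases x')
  have h: "\<sigma> = \<sigma>'" "delay \<nu> t = delay \<nu> t'" "(\<lambda>c. c \<in> B) = (\<lambda>c. c \<in> B')"
    and r: "rcw_of (reset B (delay \<nu> t)) u e' = rcw_of (reset B' (delay \<nu> t')) u' e2"
    using Cons.prems e a x w' d' a' x' by auto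
  have "t = t'" using fun_cong[OF h(2), of undefined] by (simp add: delay_def)
  moreover have "B = B'" using h(3) by (metis Collect_mem_eq)
  ultimately have "u = u'" using Cons.IH r Cons.prems e w' d' by fastforce
  then show ?case using h \<open>t = t'\<close> a a' w' by simp
qed

lemma resets_rcw: "length w = length d \<Longrightarrow>
   resets (rcw_of \<nu> w d) = map (\<lambda>(l1, \<sigma>1, g, B, l2). (\<lambda>c. c \<in> B)) d"
proof (induction w arbitrary: d \<nu>)
  case Nil then show ?case by (simp add: resets_def)
next
  case (Cons a u)
  then obtain x e' where e: "d = x # e'" by (cases d) auto
  obtain \<sigma> t where a: "a = (\<sigma>, t)" by (cases a)
  obtain l1 \<sigma>1 g B l2 where x: "x = (l1, \<sigma>1, g, B, l2)" by (cases x)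
  show ?case using Cons e a x by (auto simp: resets_def)
qed

lemma final_loc: "length w = length d \<Longrightarrow> length w' = length d \<Longrightarrow>
   fst (final_of l \<nu> w d) = fst (final_of l \<nu>' w' d)"
proof (induction w arbitrary: d \<nu> w' \<nu>' l)
  case Nil then show ?case by simp
next
  case (Cons a u)
  then obtain x e' where e: "d = x # e'" by (cases d) auto
  obtain \<sigma> t where a: "a = (\<sigma>, t)" by (cases a)
  obtain l1 \<sigma>1 g B l2 where x: "x = (l1, \<sigma>1, g, B, l2)" by (cases x)
  from Cons.prems e obtain a' u' where w': "w' = a' # u'" by (cases w') auto
  obtain \<sigma>' t' where a': "a' = (\<sigma>', t')" by (cases a')
  show ?case using Cons e a x w' a' by auto
qed

lemma run_nonneg: "is_run A l \<nu> w d \<Longrightarrow> tword A w \<Longrightarrow> \<forall>c. 0 \<le> \<nu> c \<Longrightarrow>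
   \<forall>c. 0 \<le> snd (final_of l \<nu> w d) c"
proof (induction A l \<nu> w d rule: is_run.induct)
  case (2 A l \<nu> \<sigma> t w l1 \<sigma>1 g B l2 ds)
  have "\<forall>c. 0 \<le> reset B (delay \<nu> t) c" using 2(3,4) by (auto simp: reset_def delay_def tword_def)
  moreover have "tword A w" using 2(3) by (auto simp: tword_def)
  ultimately show ?case using 2 by auto
qed auto

lemma kappa_ge:
  assumes "finite (trans A)" "(l, \<sigma>, g, B, l') \<in> trans A" "(c, op, k) \<in> set g"
  shows "real k \<le> kappa A c"
proof -
  let ?S = "{k. \<exists>(l, \<sigma>, g, B, l') \<in> trans A. \<exists>op. (c, op, k) \<in> set g}"
  have "?S \<subseteq> (\<lambda>(c, op, k). k) ` (\<Union>(l, \<sigma>, g, B, l') \<in> trans A. set g)"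
  proof
    fix k assume "k \<in> ?S"
    then obtain l \<sigma> g B l' op where "(l, \<sigma>, g, B, l') \<in> trans A" "(c, op, k) \<in> set g" by blast
    then show "k \<in> (\<lambda>(c, op, k). k) ` (\<Union>(l, \<sigma>, g, B, l') \<in> trans A. set g)"
      by (force intro!: image_eqI[where x="(c, op, k)"])
  qed
  moreover have "finite ((\<lambda>(c, op, k). k) ` (\<Union>(l, \<sigma>, g, B, l') \<in> trans A. set g))"
    using assms(1) by (auto simp: case_prod_beta)
  ultimately have "finite ?S" by (rule finite_subset)
  moreover have "k \<in> ?S" using assms(2,3) by blast
  ultimately have "k \<le> Max (insert 0 ?S)" by simp
  then show ?thesis unfolding kappa_def by simp
qed

lemma guard_transfer:
  assumes "finite (trans A)" "(l, \<sigma>, g, B, l') \<in> trans A"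
    "region A v1 = region A v2" "\<forall>c. 0 \<le> v1 c" "\<forall>c. 0 \<le> v2 c" "guard_sat g v1"
  shows "guard_sat g v2"
proof -
  have "v2 \<in> region A v2" using assms(5) by (auto simp: region_def region_equiv_def)
  then have e12: "region_equiv A v1 v2" using assms(3) by (auto simp: region_def)
  have "v1 \<in> region A v1" using assms(4) by (auto simp: region_def region_equiv_def)
  then have e21: "region_equiv A v2 v1" using assms(3) by (auto simp: region_def)
  show ?thesis unfolding guard_sat_def
  proof (intro ballI, clarify)
    fix c op k assume m: "(c, op, k) \<in> set g"
    have "cmp_sat op (v1 c) (real k)" using assms(6) m by (auto simp: guard_sat_def)
    then show "cmp_sat op (v2 c) (real k)"
      using atom_equiv[of "v1 c" "v2 c" "kappa A c" k op] e12 e21 kappa_ge[OF assms(1,2) m]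
      unfolding region_equiv_def by metis
  qed
qed

lemma run_snoc:
  assumes "run A u e" "final_of (init A) zero_val u e = (l, \<nu>)" "\<sigma> \<in> alpha A" "0 \<le> t"
    "(l, \<sigma>, g, B, l') \<in> trans A" "guard_sat g (delay \<nu> t)"
  shows "run A (u @ [(\<sigma>, t)]) (e @ [(l, \<sigma>, g, B, l')])"
proof -
  have len: "length u = length e" using assms(1) is_run_len by (auto simp: run_def)
  show ?thesis using assms is_run_append[OF len] by (auto simp: run_def tword_def)
qed

lemma det_step:
  assumes "CTA A" "run A u e" "final_of (init A) zero_val u e = (l, \<nu>)" "\<sigma> \<in> alpha A" "0 \<le> t"
    "(l, \<sigma>, g, B, l') \<in> trans A" "guard_sat g (delay \<nu> t)"
    "(l, \<sigma>, g2, B2, l2) \<in> trans A" "guard_sat g2 (delay \<nu> t)"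
  shows "(g, B, l') = (g2, B2, l2)"
proof -
  have r1: "run A (u @ [(\<sigma>, t)]) (e @ [(l, \<sigma>, g, B, l')])" using run_snoc assms(2-7) by metis
  have r2: "run A (u @ [(\<sigma>, t)]) (e @ [(l, \<sigma>, g2, B2, l2)])" using run_snoc assms(2-5,8,9) by metis
  have "tword A (u @ [(\<sigma>, t)])" using r1 by (simp add: run_def)
  then have "\<exists>!ds. run A (u @ [(\<sigma>, t)]) ds" using assms(1) by (simp add: CTA_def)
  then show ?thesis using r1 r2 by auto
qed

lemma cont_det:
  assumes "CTA A" "run A u1 e1" "final_of (init A) zero_val u1 e1 = (l, \<nu>1)"
    "run A u2 e2" "final_of (init A) zero_val u2 e2 = (l, \<nu>2)"
    "is_run A l \<nu>1 w1 d1" "tword A w1" "is_run A l \<nu>2 w2 d2" "tword A w2"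
    "region_word A (rcw_of \<nu>1 w1 d1) = region_word A (rcw_of \<nu>2 w2 d2)"
  shows "d1 = d2"
  using assms
proof (induction w1 arbitrary: u1 e1 u2 e2 l \<nu>1 \<nu>2 d1 w2 d2)
  case Nil
  then have "d1 = []" by (cases d1) auto
  moreover have "w2 = []"
  proof -
    have "rcw_of \<nu>2 w2 d2 = []" using Nil.prems(10) \<open>d1 = []\<close> by (simp add: region_word_def)
    then show ?thesis using rcw_len[of w2 d2 \<nu>2] is_run_len[OF Nil.prems(8)] by (metis length_0_conv)
  qed
  ultimately show ?case using Nil by (cases d2) auto
next
  case (Cons a w1')
  obtain \<sigma> t where a: "a = (\<sigma>, t)" by (cases a)
  from Cons.prems(6) a obtain g B l' d1' where d1: "d1 = (l, \<sigma>, g, B, l') # d1'"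
    by (cases d1) auto
  have lw2: "length w2 = length d2" using is_run_len[OF Cons.prems(8)] .
  have "length (rcw_of \<nu>2 w2 d2) = length (rcw_of \<nu>1 (a # w1') d1)"
    using Cons.prems(10) unfolding region_word_def by (metis length_map)
  then have "w2 \<noteq> []" using lw2 d1 a by auto
  then obtain \<sigma>' t' w2' where w2: "w2 = (\<sigma>', t') # w2'" by (cases w2) auto
  from Cons.prems(8) w2 obtain g2 B2 l2 d2' where d2: "d2 = (l, \<sigma>', g2, B2, l2) # d2'"
    by (cases d2) auto
  have run1: "(l, \<sigma>, g, B, l') \<in> trans A" "guard_sat g (delay \<nu>1 t)"
    "is_run A l' (reset B (delay \<nu>1 t)) w1' d1'"
    using Cons.prems(6) a d1 by auto
  have run2: "(l, \<sigma>', g2, B2, l2) \<in> trans A" "guard_sat g2 (delay \<nu>2 t')"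
    "is_run A l2 (reset B2 (delay \<nu>2 t')) w2' d2'"
    using Cons.prems(8) w2 d2 by auto
  have rw: "\<sigma> = \<sigma>'" "region A (delay \<nu>1 t) = region A (delay \<nu>2 t')"
    "region_word A (rcw_of (reset B (delay \<nu>1 t)) w1' d1') = region_word A (rcw_of (reset B2 (delay \<nu>2 t')) w2' d2')"
    using Cons.prems(10) a d1 w2 d2 by (auto simp: region_word_def)
  have tw: "\<sigma> \<in> alpha A" "0 \<le> t" "tword A w1'" using Cons.prems(7) a by (auto simp: tword_def)
  have tw2: "0 \<le> t'" "tword A w2'" using Cons.prems(9) w2 by (auto simp: tword_def)
  have nn1: "\<forall>c. 0 \<le> \<nu>1 c" using run_nonneg[of A "init A" zero_val u1 e1] Cons.prems(2,3)
    by (auto simp: run_def zero_val_def)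
  have nn2: "\<forall>c. 0 \<le> \<nu>2 c" using run_nonneg[of A "init A" zero_val u2 e2] Cons.prems(4,5)
    by (auto simp: run_def zero_val_def)
  have fin: "finite (trans A)" using Cons.prems(1) by (simp add: CTA_def ta_wf_def)
  have gs: "guard_sat g (delay \<nu>2 t')"
    using guard_transfer[OF fin run1(1) rw(2)] nn1 nn2 tw(2) tw2(1) run1(2)
    by (auto simp: delay_def)
  have eq: "(g, B, l') = (g2, B2, l2)"
    using det_step[OF Cons.prems(1,4,5) tw(1) tw2(1) run1(1) gs] run2(1,2) rw(1) by simp
  have lu1: "length u1 = length e1" using Cons.prems(2) is_run_len[of A "init A" zero_val u1 e1] by (auto simp: run_def)
  have lu2: "length u2 = length e2" using Cons.prems(4) is_run_len[of A "init A" zero_val u2 e2] by (auto simp: run_def)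
  have R1: "run A (u1 @ [(\<sigma>, t)]) (e1 @ [(l, \<sigma>, g, B, l')])"
    using run_snoc[OF Cons.prems(2,3) tw(1,2) run1(1,2)] .
  have R2: "run A (u2 @ [(\<sigma>, t')]) (e2 @ [(l, \<sigma>, g, B, l')])"
    using run_snoc[OF Cons.prems(4,5) tw(1) tw2(1) run1(1) gs] .
  have F1: "final_of (init A) zero_val (u1 @ [(\<sigma>, t)]) (e1 @ [(l, \<sigma>, g, B, l')]) = (l', reset B (delay \<nu>1 t))"
    using final_append[OF lu1] Cons.prems(3) by simp
  have F2: "final_of (init A) zero_val (u2 @ [(\<sigma>, t')]) (e2 @ [(l, \<sigma>, g, B, l')]) = (l', reset B (delay \<nu>2 t'))"
    using final_append[OF lu2] Cons.prems(5) by simp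
  have "d1' = d2'"
    using Cons.IH[OF Cons.prems(1) R1 F1 R2 F2 run1(3) tw(3) _ tw2(2)] run2(3) rw(3) eq by auto
  then show ?case using d1 d2 eq rw(1) by simp
qed

lemma run_unique_rcw:
  assumes "CTA A" "run A w ds" "run A w' ds'" "rcw_of zero_val w ds = rcw_of zero_val w' ds'"
  shows "w = w' \<and> ds = ds'"
proof -
  have l1: "length w = length ds" using assms(2) is_run_len[of A "init A" zero_val w ds] by (simp add: run_def)
  have l2: "length w' = length ds'" using assms(3) is_run_len[of A "init A" zero_val w' ds'] by (simp add: run_def)
  have "w = w'" using rcw_inj[OF l1 l2 assms(4)] .
  moreover have "\<exists>!d. run A w d" using assms(1,2) by (simp add: CTA_def run_def)
  ultimately show ?thesis using assms(2,3) by auto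
qed

lemma Lr_iff:
  assumes "CTA A" "run A w ds"
  shows "rcw_of zero_val w ds \<in> Lr A \<longleftrightarrow> fst (final_of (init A) zero_val w ds) \<in> acc A"
proof
  assume "rcw_of zero_val w ds \<in> Lr A"
  then obtain w' ds' where "run A w' ds'" "rcw_of zero_val w ds = rcw_of zero_val w' ds'"
    "fst (final_of (init A) zero_val w' ds') \<in> acc A" unfolding Lr_def by auto
  then show "fst (final_of (init A) zero_val w ds) \<in> acc A"
    using run_unique_rcw[OF assms] by metis
next
  assume "fst (final_of (init A) zero_val w ds) \<in> acc A"
  then show "rcw_of zero_val w ds \<in> Lr A" using assms(2) unfolding Lr_def by blast
qed

lemma split_run:
  assumes "CTA A" "run A w ds" "rcw_of zero_val w ds = \<gamma> @ \<gamma>'"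
    "run A w1 ds1" "rcw_of zero_val w1 ds1 = \<gamma>"
  shows "\<exists>wb db. w = w1 @ wb \<and> ds = ds1 @ db
     \<and> rcw_of (snd (final_of (init A) zero_val w1 ds1)) wb db = \<gamma>'
     \<and> tword A wb
     \<and> is_run A (fst (final_of (init A) zero_val w1 ds1)) (snd (final_of (init A) zero_val w1 ds1)) wb db"
proof -
  have l: "length w = length ds" using assms(2) is_run_len[of A "init A" zero_val w ds] by (simp add: run_def)
  have l1: "length w1 = length ds1" using assms(4) is_run_len[of A "init A" zero_val w1 ds1] by (simp add: run_def)
  define n where "n = length w1"
  have lg: "length \<gamma> = n" using rcw_len[OF l1] assms(5) n_def by metis
  have lw: "length w = length (\<gamma> @ \<gamma>')" using rcw_len[OF l] assms(3) by metis
  then have nle: "n \<le> length w" using lg by simp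
  have ltk: "length (take n w) = length (take n ds)" using l by simp
  have split: "rcw_of zero_val w ds = rcw_of zero_val (take n w) (take n ds) @
      rcw_of (snd (final_of (init A) zero_val (take n w) (take n ds))) (drop n w) (drop n ds)"
    using rcw_append[OF ltk, of zero_val "drop n w" "drop n ds" "init A"] by simp
  have lpre: "length (rcw_of zero_val (take n w) (take n ds)) = n"
    using rcw_len[OF ltk] nle by simp
  have pre: "rcw_of zero_val (take n w) (take n ds) = \<gamma>"
    and post: "rcw_of (snd (final_of (init A) zero_val (take n w) (take n ds))) (drop n w) (drop n ds) = \<gamma>'"
    using split assms(3) lpre lg by (metis append_eq_append_conv)+
  have runall: "is_run A (init A) zero_val (take n w @ drop n w) (take n ds @ drop n ds)"
    using assms(2) by (simp add: run_def)
  have rp: "is_run A (init A) zero_val (take n w) (take n ds)"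
    and rs: "is_run A (fst (final_of (init A) zero_val (take n w) (take n ds)))
              (snd (final_of (init A) zero_val (take n w) (take n ds))) (drop n w) (drop n ds)"
    using is_run_append[OF ltk] runall by blast+
  have tw: "tword A (take n w)" "tword A (drop n w)" using assms(2) unfolding run_def tword_def
    by (auto dest: in_set_takeD in_set_dropD)
  have "run A (take n w) (take n ds)" using rp tw by (simp add: run_def)
  then have "take n w = w1 \<and> take n ds = ds1"
    using run_unique_rcw[OF assms(1) _ assms(4)] pre assms(5) by metis
  then show ?thesis using post rs tw(2)
    by (metis append_take_drop_id)
qed

theorem lemma3p8:
  fixes A :: "('s, 'l, 'c::finite) ta"
    and \<gamma>1 \<gamma>2 :: "('s, 'c) rcword"
    and q :: "'l \<times> 'c val set"
  assumes "CTA A"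
    and "valid_rc A \<gamma>1" and "valid_rc A \<gamma>2"
    and "reaches A \<gamma>1 q" and "reaches A \<gamma>2 q"
  shows "rc_equiv A \<gamma>1 \<gamma>2"
  unfolding rc_equiv_def
proof (intro allI ballI)
  fix \<xi> \<gamma>1' \<gamma>2'
  assume v1: "\<gamma>1' \<in> vs A \<gamma>1 \<xi>" and v2: "\<gamma>2' \<in> vs A \<gamma>2 \<xi>"
  obtain u1 e1 where r1: "run A u1 e1" "rcw_of zero_val u1 e1 = \<gamma>1"
    and f1: "fst (final_of (init A) zero_val u1 e1) = fst q"
    using assms(4) unfolding reaches_def Let_def case_prod_beta by auto
  obtain u2 e2 where r2: "run A u2 e2" "rcw_of zero_val u2 e2 = \<gamma>2"
    and f2: "fst (final_of (init A) zero_val u2 e2) = fst q"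
    using assms(5) unfolding reaches_def Let_def case_prod_beta by auto
  obtain w1 ds1 where R1: "run A w1 ds1" "rcw_of zero_val w1 ds1 = \<gamma>1 @ \<gamma>1'"
    using v1 unfolding vs_def valid_rc_def by auto
  obtain w2 ds2 where R2: "run A w2 ds2" "rcw_of zero_val w2 ds2 = \<gamma>2 @ \<gamma>2'"
    using v2 unfolding vs_def valid_rc_def by auto
  have rw: "region_word A \<gamma>1' = region_word A \<gamma>2'" using v1 v2 by (simp add: vs_def)
  define \<nu>1 where "\<nu>1 = snd (final_of (init A) zero_val u1 e1)"
  define \<nu>2 where "\<nu>2 = snd (final_of (init A) zero_val u2 e2)"
  obtain wb1 db1 where S1: "w1 = u1 @ wb1" "ds1 = e1 @ db1" "rcw_of \<nu>1 wb1 db1 = \<gamma>1'"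
    "tword A wb1" "is_run A (fst q) \<nu>1 wb1 db1"
    using split_run[OF assms(1) R1 r1] f1 \<nu>1_def by metis
  obtain wb2 db2 where S2: "w2 = u2 @ wb2" "ds2 = e2 @ db2" "rcw_of \<nu>2 wb2 db2 = \<gamma>2'"
    "tword A wb2" "is_run A (fst q) \<nu>2 wb2 db2"
    using split_run[OF assms(1) R2 r2] f2 \<nu>2_def by metis
  have F1: "final_of (init A) zero_val u1 e1 = (fst q, \<nu>1)" using f1 \<nu>1_def by (metis prod.collapse)
  have F2: "final_of (init A) zero_val u2 e2 = (fst q, \<nu>2)" using f2 \<nu>2_def by (metis prod.collapse)
  have deq: "db1 = db2"
    using cont_det[OF assms(1) r1(1) F1 r2(1) F2 S1(5) S1(4) S2(5) S2(4)] rw S1(3) S2(3) by simp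
  have lb1: "length wb1 = length db1" using is_run_len[OF S1(5)] .
  have lb2: "length wb2 = length db2" using is_run_len[OF S2(5)] .
  have le1: "length u1 = length e1" using r1(1) is_run_len[of A "init A" zero_val u1 e1] by (simp add: run_def)
  have le2: "length u2 = length e2" using r2(1) is_run_len[of A "init A" zero_val u2 e2] by (simp add: run_def)
  have "fst (final_of (init A) zero_val w1 ds1) = fst (final_of (fst q) \<nu>1 wb1 db1)"
    using final_append[OF le1] S1(1,2) F1 by simp
  also have "\<dots> = fst (final_of (fst q) \<nu>2 wb2 db2)"
    using final_loc[OF lb1, of wb2 "fst q" \<nu>1 \<nu>2] lb2 deq by simp
  also have "\<dots> = fst (final_of (init A) zero_val w2 ds2)"
    using final_append[OF le2] S2(1,2) F2 by simp
  finally have floc: "fst (final_of (init A) zero_val w1 ds1) = fst (final_of (init A) zero_val w2 ds2)" .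
  have "\<gamma>1 @ \<gamma>1' \<in> Lr A \<longleftrightarrow> \<gamma>2 @ \<gamma>2' \<in> Lr A"
    using Lr_iff[OF assms(1) R1(1)] Lr_iff[OF assms(1) R2(1)] R1(2) R2(2) floc by simp
  moreover have "resets \<gamma>1' = resets \<gamma>2'"
    using resets_rcw[OF lb1] resets_rcw[OF lb2] S1(3) S2(3) deq by metis
  ultimately show "(\<gamma>1 @ \<gamma>1' \<in> Lr A \<longleftrightarrow> \<gamma>2 @ \<gamma>2' \<in> Lr A) \<and> resets \<gamma>1' = resets \<gamma>2'" by simp
qed
end
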